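(* Let $L$ be a Latin square of order $n$ and let $\sigma=(\alpha,\beta,\gamma;(123))$ be an autoparatopism of $L$. Suppose $(i,j,k)\in O(L)$, and let $a=o_{\alpha\beta\gamma}(i)$, $b=o_{\beta\gamma\alpha}(j)$ and $c=o_{\gamma\alpha\beta}(k)$. Then $$\operatorname{lcm}(a,b)=\operatorname{lcm}(a,c)=\operatorname{lcm}(b,c)=\operatorname{lcm}(a,b,c).$$
   Context: A Latin square $L$ of order $n$ is an $n\times n$ array with rows, columns and symbols indexed by $[n]$, in which each symbol occurs exactly once in each row and each column. Its set of triples is $O(L)=\{(i,j,L(i,j))\}$. Permutations act on the right and are composed left to right. A paratopism $\sigma=(\alpha,\beta,\gamma;\delta)$, with $\alpha,\beta,\gamma\in\mathcal S_n$ and $\delta\in\mathcal S_3$, maps $L$ to $L^\sigma$ by replacing each triple $(x,y,z)$ with $(x\alpha,y\beta,z\gamma)$ and then permuting coordinates according to $\delta$. For $\delta=(123)$ the triple $(x,y,z)$ maps to $(z\gamma,x\alpha,y\beta)$. $\sigma$ is an autoparatopism of $L$ if $L^\sigma=L$. $o_\pi(i)$ is the length of the cycle of $\pi$ containing $i$, with fixed points counting as cycles of length $1$. *)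

theory Defs
  imports "HOL-Combinatorics.Permutations"
begin

text \<open>Symbols, rows, columns indexed by [n] = {0..<n}.\<close>

definition latin_square :: "nat \<Rightarrow> (nat \<Rightarrow> nat \<Rightarrow> nat) \<Rightarrow> bool" where
  "latin_square n L \<longleftrightarrow>
     (\<forall>i<n. \<forall>j<n. L i j < n) \<and>
     (\<forall>i<n. \<forall>s<n. \<exists>!j. j < n \<and> L i j = s) \<and>
     (\<forall>j<n. \<forall>s<n. \<exists>!i. i < n \<and> L i j = s)"

definition triples :: "nat \<Rightarrow> (nat \<Rightarrow> nat \<Rightarrow> nat) \<Rightarrow> (nat \<times> nat \<times> nat) set" where
  "triples n L = {(i, j, L i j) | i j. i < n \<and> j < n}"

definition paratopism_123 ::
  "(nat \<Rightarrow> nat) \<Rightarrow> (nat \<Rightarrow> nat) \<Rightarrow> (nat \<Rightarrow> nat) \<Rightarrow> (nat \<times> nat \<times> nat) set \<Rightarrow> (nat \<times> nat \<times> nat) set" where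
  "paratopism_123 \<alpha> \<beta> \<gamma> T = (\<lambda>(x, y, z). (\<gamma> z, \<alpha> x, \<beta> y)) ` T"

definition autoparatopism_123 ::
  "nat \<Rightarrow> (nat \<Rightarrow> nat \<Rightarrow> nat) \<Rightarrow> (nat \<Rightarrow> nat) \<Rightarrow> (nat \<Rightarrow> nat) \<Rightarrow> (nat \<Rightarrow> nat) \<Rightarrow> bool" where
  "autoparatopism_123 n L \<alpha> \<beta> \<gamma> \<longleftrightarrow>
     \<alpha> permutes {0..<n} \<and> \<beta> permutes {0..<n} \<and> \<gamma> permutes {0..<n} \<and>
     paratopism_123 \<alpha> \<beta> \<gamma> (triples n L) = triples n L"

definition cycle_len :: "(nat \<Rightarrow> nat) \<Rightarrow> nat \<Rightarrow> nat" where
  "cycle_len \<pi> i = (LEAST k. 0 < k \<and> (\<pi> ^^ k) i = i)"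

end

theory Submission
  imports Defs "HOL-Combinatorics.Cycles"
begin

lemma cyc_dvd:
  assumes "permutation p"
  shows "0 < cycle_len p x \<and> (\<forall>m. (p ^^ m) x = x \<longleftrightarrow> cycle_len p x dvd m)"
proof -
  obtain N where N: "p ^^ N = id" "N > 0" using permutation_is_nilpotent[OF assms] by blast
  have ex: "0 < N \<and> (p ^^ N) x = x" using N by simp
  define k where "k = cycle_len p x"
  have k: "0 < k \<and> (p ^^ k) x = x" unfolding k_def cycle_len_def by (rule LeastI[of "\<lambda>k. 0 < k \<and> (p ^^ k) x = x", OF ex])
  have kmin: "\<And>r. 0 < r \<Longrightarrow> (p ^^ r) x = x \<Longrightarrow> k \<le> r"
    unfolding k_def cycle_len_def by (rule Least_le) simp
  have pw: "\<And>q. (p ^^ (k * q)) x = x"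
  proof -
    fix q show "(p ^^ (k * q)) x = x"
      by (induction q) (auto simp: funpow_add k)
  qed
  have "(p ^^ m) x = x \<longleftrightarrow> k dvd m" for m
  proof
    assume h: "(p ^^ m) x = x"
    have "m = m mod k + k * (m div k)" by simp
    then have "(p ^^ m) x = (p ^^ (m mod k)) ((p ^^ (k * (m div k))) x)"
      by (metis funpow_add comp_apply)
    then have "(p ^^ (m mod k)) x = x" using h pw by simp
    moreover have "m mod k < k" using k by simp
    ultimately have "m mod k = 0" using kmin by (meson not_gr0 not_le)
    then show "k dvd m" by auto
  next
    assume "k dvd m" then obtain q where "m = k * q" by auto
    then show "(p ^^ m) x = x" using pw by simp
  qed
  then show ?thesis using k k_def by blast
qed

theorem lemma3p3:
  fixes n :: nat and L :: "nat \<Rightarrow> nat \<Rightarrow> nat" and \<alpha> \<beta> \<gamma> :: "nat \<Rightarrow> nat"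
    and i j k :: nat
  assumes "latin_square n L"
    and "autoparatopism_123 n L \<alpha> \<beta> \<gamma>"
    and "(i, j, k) \<in> triples n L"
  defines "a \<equiv> cycle_len (\<gamma> \<circ> \<beta> \<circ> \<alpha>) i"
    and "b \<equiv> cycle_len (\<alpha> \<circ> \<gamma> \<circ> \<beta>) j"
    and "c \<equiv> cycle_len (\<beta> \<circ> \<alpha> \<circ> \<gamma>) k"
  shows "lcm a b = lcm a (lcm b c) \<and> lcm a c = lcm a (lcm b c) \<and> lcm b c = lcm a (lcm b c)"
proof -
  define T where "T = triples n L"
  define f where "f = \<gamma> \<circ> \<beta> \<circ> \<alpha>"
  define g where "g = \<alpha> \<circ> \<gamma> \<circ> \<beta>"
  define h where "h = \<beta> \<circ> \<alpha> \<circ> \<gamma>"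
  have pa: "\<alpha> permutes {0..<n}" "\<beta> permutes {0..<n}" "\<gamma> permutes {0..<n}"
    and TT: "paratopism_123 \<alpha> \<beta> \<gamma> T = T"
    using assms(2) unfolding autoparatopism_123_def T_def by auto
  have step: "(\<gamma> z, \<alpha> x, \<beta> y) \<in> T" if "(x, y, z) \<in> T" for x y z
  proof -
    have "(\<gamma> z, \<alpha> x, \<beta> y) \<in> paratopism_123 \<alpha> \<beta> \<gamma> T"
      unfolding paratopism_123_def using that by force
    then show ?thesis using TT by simp
  qed
  have step3: "(f x, g y, h z) \<in> T" if "(x, y, z) \<in> T" for x y z
    using step[OF step[OF step[OF that]]] unfolding f_def g_def h_def by simp
  have iter: "((f ^^ m) i, (g ^^ m) j, (h ^^ m) k) \<in> T" for m
  proof (induction m)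
    case 0 then show ?case using assms(3) T_def by simp
  next
    case (Suc m) then show ?case using step3 by simp
  qed
  have memT: "(x, y, z) \<in> T \<longleftrightarrow> x < n \<and> y < n \<and> z = L x y" for x y z
    unfolding T_def triples_def by auto
  have ls: "\<forall>i<n. \<forall>s<n. \<exists>!j. j < n \<and> L i j = s" "\<forall>j<n. \<forall>s<n. \<exists>!i. i < n \<and> L i j = s"
    "\<forall>i<n. \<forall>j<n. L i j < n"
    using assms(1) unfolding latin_square_def by auto
  have ijk: "i < n" "j < n" "k = L i j" using assms(3) memT T_def by auto
  have perm: "permutation f" "permutation g" "permutation h"
    unfolding f_def g_def h_def using pa
    by (meson finite_atLeastLessThan permutes_compose permutes_imp_permutation)+
  note cf = cyc_dvd[OF perm(1), of i] and cg = cyc_dvd[OF perm(2), of j]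
    and ch = cyc_dvd[OF perm(3), of k]
  have A: "c dvd lcm a b"
  proof -
    let ?m = "lcm a b"
    have "(f ^^ ?m) i = i" "(g ^^ ?m) j = j" using cf cg unfolding a_def b_def f_def g_def by auto
    then have "(h ^^ ?m) k = k" using iter[of ?m] memT ijk by auto
    then show ?thesis using ch unfolding c_def h_def by auto
  qed
  have B: "b dvd lcm a c"
  proof -
    let ?m = "lcm a c"
    have e: "(f ^^ ?m) i = i" "(h ^^ ?m) k = k" using cf ch unfolding a_def c_def f_def h_def by auto
    have "(g ^^ ?m) j < n" "L i ((g ^^ ?m) j) = k" using iter[of ?m] memT e by auto
    moreover have "k < n" using ls(3) ijk by simp
    moreover have "\<exists>!y. y < n \<and> L i y = k" using ls(1) ijk \<open>k < n\<close> by blast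
    ultimately have "(g ^^ ?m) j = j" using ijk by (metis (no_types, lifting))
    then show ?thesis using cg unfolding b_def g_def by auto
  qed
  have C: "a dvd lcm b c"
  proof -
    let ?m = "lcm b c"
    have e: "(g ^^ ?m) j = j" "(h ^^ ?m) k = k" using cg ch unfolding b_def c_def g_def h_def by auto
    have "(f ^^ ?m) i < n" "L ((f ^^ ?m) i) j = k" using iter[of ?m] memT e by auto
    moreover have "k < n" using ls(3) ijk by simp
    moreover have "\<exists>!x. x < n \<and> L x j = k" using ls(2) ijk \<open>k < n\<close> by blast
    ultimately have "(f ^^ ?m) i = i" using ijk by (metis (no_types, lifting))
    then show ?thesis using cf unfolding a_def f_def by auto
  qed
  have l1: "lcm a b = lcm a (lcm b c)"
    by (rule dvd_antisym) (auto intro!: lcm_least A)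
  have l2: "lcm a c = lcm a (lcm b c)"
    by (rule dvd_antisym) (auto intro!: lcm_least B)
  have l3: "lcm b c = lcm a (lcm b c)"
    by (rule dvd_antisym) (auto intro!: lcm_least C)
  show ?thesis using l1 l2 l3 by blast
qed

end
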